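(* For every digraph $X$, $U_{X^{\mathrm{op}}}=U_X$.
   Context: A digraph $X=(V,E)$: $V$ finite, $E\subset\{(u,v)\in V\times V\mid u\ne v\}$; $X^{\mathrm{op}}=(V,\{(v,u)\mid(u,v)\in E\})$. $n=|V|$, $\Sigma_V$ is the set of bijections $\sigma:[n]\to V$, $X\mathrm{Des}(\sigma)=\{i\in[n-1]\mid(\sigma_i,\sigma_{i+1})\in E\}$. $F_I=\sum x_{i_1}\cdots x_{i_n}$ over $1\le i_1\le\cdots\le i_n$ with $i_j<i_{j+1}$ for all $j\in I$. The Redei–Berge symmetric function is $U_X=\sum_{\sigma\in\Sigma_V}F_{X\mathrm{Des}(\sigma)}$. *)

theory Defs
  imports Main "HOL-Library.Multiset"
begin

definition digraph :: "'a set \<Rightarrow> ('a \<times> 'a) set \<Rightarrow> bool" where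
  "digraph V E \<longleftrightarrow> finite V \<and> E \<subseteq> {(u,v). u \<in> V \<and> v \<in> V \<and> u \<noteq> v}"

definition op_edges :: "('a \<times> 'a) set \<Rightarrow> ('a \<times> 'a) set" where
  "op_edges E = {(v,u) | u v. (u,v) \<in> E}"

(* Sigma_V: bijections [n] -> V, represented as lists sigma = [sigma_1,...,sigma_n]
   (sigma_i = sigma ! (i-1)) that enumerate V without repetition. *)
definition Sigma_V :: "'a set \<Rightarrow> 'a list set" where
  "Sigma_V V = {xs. distinct xs \<and> set xs = V}"

definition XDes :: "('a \<times> 'a) set \<Rightarrow> 'a list \<Rightarrow> nat set" where
  "XDes E xs = {i \<in> {1..length xs - 1}. (xs ! (i - 1), xs ! i) \<in> E}"

(* Formal power series in the commuting variables x_1, x_2, ... with integer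
   coefficients, represented by their coefficient function: the monomial
   prod_i x_i^(count M i) is encoded by the multiset M of variable indices. *)
type_synonym fps_inf = "nat multiset \<Rightarrow> int"

(* Fundamental quasisymmetric function F_I of degree n:
   sum of x_{i_1}...x_{i_n} over 1 <= i_1 <= ... <= i_n with i_j < i_{j+1} for j in I. *)
definition F_qsym :: "nat \<Rightarrow> nat set \<Rightarrow> fps_inf" where
  "F_qsym n I = (\<lambda>M. int (card {s :: nat list. length s = n \<and> (\<forall>j \<in> set s. 1 \<le> j)
      \<and> sorted s \<and> (\<forall>j \<in> I. 1 \<le> j \<and> j < n \<longrightarrow> s ! (j - 1) < s ! j)
      \<and> mset s = M}))"

definition redei_berge :: "'a set \<Rightarrow> ('a \<times> 'a) set \<Rightarrow> fps_inf" where
  "redei_berge V E = (\<lambda>M. \<Sum>\<sigma> \<in> Sigma_V V. F_qsym (card V) (XDes E \<sigma>) M)"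

end

theory Submission imports Defs begin

definition T :: "('a \<times> nat) list \<Rightarrow> ('a \<times> nat) list" where
  "T zs = sort_key snd (rev zs)"

definition adjok :: "('a \<times> 'a) set \<Rightarrow> ('a \<times> nat) list \<Rightarrow> bool" where
  "adjok E zs \<longleftrightarrow> (\<forall>i. Suc i < length zs \<longrightarrow> snd (zs!i) = snd (zs!Suc i) \<longrightarrow> (fst (zs!i), fst (zs!Suc i)) \<notin> E)"

lemma filter_sort_key_eq:
  "filter (\<lambda>x. f x = c) (sort_key f xs) = filter (\<lambda>x. f x = c) xs"
  unfolding filter_sort by (rule properties_for_sort_key) (auto intro: sorted_map_same)

lemma filter_T: "filter (\<lambda>x. snd x = c) (T zs) = rev (filter (\<lambda>x. snd x = c) zs)"
  unfolding T_def filter_sort_key_eq by (simp add: rev_filter)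

lemma TT: assumes "sorted (map snd zs)" shows "T (T zs) = zs"
  unfolding T_def[of "T zs"]
proof (rule properties_for_sort_key)
  show "mset zs = mset (rev (T zs))" by (simp add: T_def)
  show "sorted (map snd zs)" by fact
  fix k
  have "filter (\<lambda>x. snd x = snd k) (rev (T zs)) = filter (\<lambda>x. snd x = snd k) zs"
    by (simp add: rev_filter[symmetric] filter_T)
  then show "filter (\<lambda>x. snd k = snd x) zs = filter (\<lambda>x. snd k = snd x) (rev (T zs))"
    by (simp add: eq_commute[of "snd k"])
qed

lemma nth_split: "Suc i < length zs \<Longrightarrow> zs = take i zs @ zs!i # zs!Suc i # drop (Suc (Suc i)) zs"
  by (metis Cons_nth_drop_Suc Suc_lessD append_take_drop_id)

lemma filter_adj:
  assumes "filter P zs = u @ b # a # w"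
  shows "\<exists>p r s. zs = p @ b # r @ a # s \<and> filter P r = []"
proof (insert assms, induction zs arbitrary: u)
  case Nil then show ?case by simp
next
  case (Cons z zs)
  show ?case
  proof (cases "P z")
    case False
    then have "filter P zs = u @ b # a # w" using Cons.prems by simp
    from Cons.IH[OF this] obtain p r s where "zs = p @ b # r @ a # s \<and> filter P r = []" by blast
    then have "z # zs = (z # p) @ b # r @ a # s \<and> filter P r = []" by simp
    then show ?thesis by blast
  next
    case True
    show ?thesis
    proof (cases u)
      case Nil
      then have zb: "z = b" and f: "filter P zs = a # w" using Cons.prems True by auto
      from f obtain us vs where "zs = us @ a # vs" "\<forall>x\<in>set us. \<not> P x"
        by (auto simp: filter_eq_Cons_iff)
      then have "z # zs = [] @ b # us @ a # vs \<and> filter P us = []" using zb by (simp add: filter_empty_conv)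
      then show ?thesis by blast
    next
      case (Cons u0 u')
      then have "filter P zs = u' @ b # a # w" using Cons.prems True by simp
      from Cons.IH[OF this] obtain p r s where "zs = p @ b # r @ a # s \<and> filter P r = []" by blast
      then have "z # zs = (z # p) @ b # r @ a # s \<and> filter P r = []" by simp
      then show ?thesis by blast
    qed
  qed
qed

lemma T_adjok:
  assumes s: "sorted (map snd zs)" and ok: "adjok E zs"
  shows "adjok (op_edges E) (T zs)"
  unfolding adjok_def
proof (intro allI impI)
  fix i assume i: "Suc i < length (T zs)" and eq: "snd (T zs ! i) = snd (T zs ! Suc i)"
  obtain a where ha: "T zs ! i = a" by blast
  obtain b where hb: "T zs ! Suc i = b" by blast
  obtain k where hk: "snd a = k" by blast
  have kb: "snd b = k" using eq ha hb hk by simp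
  let ?Q = "\<lambda>x. snd x = k"
  have dec: "T zs = take i (T zs) @ a # b # drop (Suc (Suc i)) (T zs)"
    using nth_split[OF i] ha hb by simp
  have "filter ?Q (T zs) = filter ?Q (take i (T zs)) @ a # b # filter ?Q (drop (Suc (Suc i)) (T zs))"
    by (subst dec) (simp add: hk kb)
  moreover have "filter ?Q zs = rev (filter ?Q (T zs))" by (simp add: filter_T)
  ultimately have fq: "filter ?Q zs = rev (filter ?Q (drop (Suc (Suc i)) (T zs))) @ b # a # rev (filter ?Q (take i (T zs)))"
    by simp
  then obtain p r q where zs: "zs = p @ b # r @ a # q" and r: "filter ?Q r = []"
    using filter_adj[OF fq] by blast
  have "r = []"
  proof (rule ccontr)
    assume "r \<noteq> []"
    then obtain y where y: "y \<in> set r" by (cases r) auto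
    have "snd b \<le> snd y" "snd y \<le> snd a" using s y unfolding zs
      by (auto simp: sorted_append)
    then have "snd y = k" using hk kb by simp
    then show False using r y by (simp add: filter_empty_conv)
  qed
  then have "zs ! length p = b" "zs ! Suc (length p) = a" "Suc (length p) < length zs"
    using zs by (auto simp: nth_append)
  then have "(fst b, fst a) \<notin> E" using ok hk kb unfolding adjok_def by metis
  then show "(fst (T zs ! i), fst (T zs ! Suc i)) \<notin> op_edges E"
    by (simp add: op_edges_def ha hb)
qed

definition PP :: "'a set \<Rightarrow> ('a \<times> 'a) set \<Rightarrow> nat multiset \<Rightarrow> ('a \<times> nat) list set" where
  "PP V E M = {zs. distinct (map fst zs) \<and> set (map fst zs) = V \<and> sorted (map snd zs)
     \<and> (\<forall>j\<in>set (map snd zs). 1 \<le> j) \<and> mset (map snd zs) = M \<and> adjok E zs}"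

lemma op_op: "op_edges (op_edges E) = E"
  unfolding op_edges_def by auto

lemma T_PP: assumes "zs \<in> PP V E M" shows "T zs \<in> PP V (op_edges E) M"
proof -
  have m1: "mset (map fst (T zs)) = mset (map fst zs)" by (simp add: T_def)
  have m2: "mset (map snd (T zs)) = mset (map snd zs)" by (simp add: T_def)
  have s1: "set (map fst (T zs)) = set (map fst zs)" by (metis m1 set_mset_mset)
  have s2: "set (map snd (T zs)) = set (map snd zs)" by (metis m2 set_mset_mset)
  show ?thesis using assms T_adjok[of zs E] mset_eq_imp_distinct_iff[OF m1] m2 s1 s2
    unfolding PP_def by (simp add: T_def)
qed

lemma bij_T: "bij_betw T (PP V E M) (PP V (op_edges E) M)"
proof (rule bij_betw_byWitness[where f'=T])
  show "\<forall>a\<in>PP V E M. T (T a) = a" by (simp add: PP_def TT)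
  show "\<forall>a\<in>PP V (op_edges E) M. T (T a) = a" by (simp add: PP_def TT)
  show "T ` PP V E M \<subseteq> PP V (op_edges E) M" using T_PP by blast
  show "T ` PP V (op_edges E) M \<subseteq> PP V E M" using T_PP[of _ V "op_edges E" M] op_op[of E] by auto
qed

lemma des_adj:
  assumes len: "length \<sigma> = length s" and srt: "sorted s"
  shows "(\<forall>j\<in>XDes E \<sigma>. 1 \<le> j \<and> j < length \<sigma> \<longrightarrow> s!(j-1) < s!j) \<longleftrightarrow> adjok E (zip \<sigma> s)"
proof
  assume H: "\<forall>j\<in>XDes E \<sigma>. 1 \<le> j \<and> j < length \<sigma> \<longrightarrow> s!(j-1) < s!j"
  show "adjok E (zip \<sigma> s)" unfolding adjok_def
  proof (intro allI impI)
    fix i assume i: "Suc i < length (zip \<sigma> s)" and e: "snd (zip \<sigma> s ! i) = snd (zip \<sigma> s ! Suc i)"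
    have e': "s!i = s!Suc i" using e i len by simp
    show "(fst (zip \<sigma> s ! i), fst (zip \<sigma> s ! Suc i)) \<notin> E"
    proof
      assume "(fst (zip \<sigma> s ! i), fst (zip \<sigma> s ! Suc i)) \<in> E"
      then have "(\<sigma>!i, \<sigma>!Suc i) \<in> E" using i len by simp
      then have "Suc i \<in> XDes E \<sigma>" using i len unfolding XDes_def by auto
      then have "s!i < s!Suc i" using H i len by fastforce
      then show False using e' by simp
    qed
  qed
next
  assume H: "adjok E (zip \<sigma> s)"
  show "\<forall>j\<in>XDes E \<sigma>. 1 \<le> j \<and> j < length \<sigma> \<longrightarrow> s!(j-1) < s!j"
  proof (intro ballI impI)
    fix j assume j: "j \<in> XDes E \<sigma>" and jj: "1 \<le> j \<and> j < length \<sigma>"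
    obtain i where ij: "j = Suc i" using jj by (cases j) auto
    have ed: "(\<sigma>!i, \<sigma>!Suc i) \<in> E" using j ij unfolding XDes_def by auto
    have le: "s!i \<le> s!Suc i" using srt jj ij len by (simp add: sorted_nth_mono)
    have "s!i \<noteq> s!Suc i"
    proof
      assume "s!i = s!Suc i"
      then have "(fst (zip \<sigma> s ! i), fst (zip \<sigma> s ! Suc i)) \<notin> E"
        using H jj ij len unfolding adjok_def by simp
      then show False using ed jj ij len by simp
    qed
    then show "s!(j-1) < s!j" using le ij by simp
  qed
qed

lemma count_PP:
  assumes fin: "finite V"
  shows "redei_berge V E M = int (card (PP V E M))"
proof -
  define S where "S \<sigma> = {s :: nat list. length s = card V \<and> (\<forall>j \<in> set s. 1 \<le> j)
      \<and> sorted s \<and> (\<forall>j \<in> XDes E \<sigma>. 1 \<le> j \<and> j < card V \<longrightarrow> s ! (j - 1) < s ! j)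
      \<and> mset s = M}" for \<sigma>
  have r: "redei_berge V E M = (\<Sum>\<sigma>\<in>Sigma_V V. int (card (S \<sigma>)))"
    unfolding redei_berge_def F_qsym_def S_def by simp
  have finS: "finite (Sigma_V V)"
    by (rule finite_subset[OF _ finite_lists_length_eq[OF fin, of "card V"]])
       (auto simp: Sigma_V_def distinct_card)
  have finT: "finite (S \<sigma>)" for \<sigma>
    by (rule finite_subset[OF _ finite_lists_length_eq[OF finite_set_mset[of M], of "card V"]])
       (auto simp: S_def)
  have "(\<Sum>\<sigma>\<in>Sigma_V V. int (card (S \<sigma>))) = int (card (SIGMA \<sigma>:Sigma_V V. S \<sigma>))"
    using finS finT by simp
  also have "card (SIGMA \<sigma>:Sigma_V V. S \<sigma>) = card (PP V E M)"
  proof (rule bij_betw_same_card[where f="\<lambda>(\<sigma>,s). zip \<sigma> s"])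
    show "bij_betw (\<lambda>(\<sigma>,s). zip \<sigma> s) (SIGMA \<sigma>:Sigma_V V. S \<sigma>) (PP V E M)"
    proof (rule bij_betw_byWitness[where f'="\<lambda>zs. (map fst zs, map snd zs)"])
      show "\<forall>a\<in>SIGMA \<sigma>:Sigma_V V. S \<sigma>. (\<lambda>zs. (map fst zs, map snd zs)) ((\<lambda>(\<sigma>,s). zip \<sigma> s) a) = a"
        by (auto simp: Sigma_V_def S_def distinct_card)
      show "\<forall>a\<in>PP V E M. (\<lambda>(\<sigma>,s). zip \<sigma> s) ((\<lambda>zs. (map fst zs, map snd zs)) a) = a"
        by (simp add: zip_map_fst_snd)
      show "(\<lambda>(\<sigma>,s). zip \<sigma> s) ` (SIGMA \<sigma>:Sigma_V V. S \<sigma>) \<subseteq> PP V E M"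
      proof clarsimp
        fix \<sigma> s assume a: "\<sigma> \<in> Sigma_V V" "s \<in> S \<sigma>"
        have len: "length \<sigma> = length s" using a by (auto simp: Sigma_V_def S_def distinct_card)
        have lc: "length \<sigma> = card V" using a by (auto simp: Sigma_V_def distinct_card)
        have z1: "map fst (zip \<sigma> s) = \<sigma>" "map snd (zip \<sigma> s) = s" using len by auto
        show "zip \<sigma> s \<in> PP V E M"
          unfolding PP_def mem_Collect_eq z1 using a len lc des_adj[OF len, of E]
          by (auto simp: S_def Sigma_V_def)
      qed
      show "(\<lambda>zs. (map fst zs, map snd zs)) ` PP V E M \<subseteq> (SIGMA \<sigma>:Sigma_V V. S \<sigma>)"
      proof clarsimp
        fix zs assume a: "zs \<in> PP V E M"
        have lc: "length zs = card V" using a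
          by (metis (mono_tags, lifting) PP_def distinct_card length_map mem_Collect_eq)
        have len: "length (map fst zs) = length (map snd zs)" by simp
        show "map fst zs \<in> Sigma_V V \<and> map snd zs \<in> S (map fst zs)"
          using a lc des_adj[OF len, of E] unfolding PP_def S_def Sigma_V_def
          by (auto simp: zip_map_fst_snd)
      qed
    qed
  qed
  finally show ?thesis using r by simp
qed

theorem mainTheorem10:
  fixes V :: "'a set" and E :: "('a \<times> 'a) set"
  assumes "digraph V E"
  shows "redei_berge V (op_edges E) = redei_berge V E"
proof
  fix M
  have fin: "finite V" using assms by (simp add: digraph_def)
  show "redei_berge V (op_edges E) M = redei_berge V E M"
    using count_PP[OF fin] bij_betw_same_card[OF bij_T[of V E M]] by simp
qed

end
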